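(* Let $\mathcal M$ be a finite polyptych lattice over $F$, $(\mathcal M,\mathcal N,\mathsf v,\mathsf w)$ a strict dual $F$-pair, and $\mathcal P\subseteq\mathcal M_{\mathbb R}$ a PL polytope over $F$. Then the support function satisfies $\psi_{\mathcal P}(n)=\min_{s\in V(\mathcal P)}\mathsf v(s)(n)$ for all $n\in\mathcal N_{\mathbb R}$, where $V(\mathcal P)$ is a finite set. In particular $\psi_{\mathcal P}$ is continuous and belongs to the point semialgebra $P_{\mathcal N_{\mathbb R}}$.
   Context: Fix a subring $F$ with $\mathbb Z\subseteq F\subseteq\mathbb R$. A polyptych lattice of rank $r$ over $F$ is a collection $\{M_\alpha\}_{\alpha\in I}$ of free $F$-modules of rank $r$ with piecewise $F$-linear maps (continuous and $F$-linear on each cone of some complete $F$-rational fan) $\mu_{\alpha,\beta}:M_\alpha\to M_\beta$ with $\mu_{\alpha,\alpha}=\mathrm{id}$, $\mu_{\alpha,\beta}=\mu_{\beta,\alpha}^{-1}$, $\mu_{\beta,\gamma}\circ\mu_{\alpha,\beta}=\mu_{\alpha,\gamma}$; finite if $I$ is finite. Elements are classes of $\bigsqcup M_\alpha$ under $m_\alpha\sim\mu_{\alpha,\beta}(m_\alpha)$; $\pi_\alpha$ chart maps; $\mathcal M_{\mathbb R}$ has charts $M_\alpha\otimes\mathbb R$. $m+_\alpha m':=\pi_\alpha^{-1}(\pi_\alpha(m)+\pi_\alpha(m'))$, $\lambda m:=\pi_\alpha^{-1}(\lambda\pi_\alpha(m))$. $\Sigma(\mathcal M)$: coarsest complete fan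 of cones in $\mathcal M_{\mathbb R}$ on whose chart images all mutations are linear. Points of $\mathcal M$ (resp. $\mathcal M_{\mathbb R}$): $p$ with $p(m)+p(m')=\min_\alpha p(m+_\alpha m')$ and $p(\lambda m)=\lambda p(m)$ for nonnegative scalars; sets $\mathrm{Sp}(\mathcal M)$, $\mathrm{Sp}_{\mathbb R}(\mathcal M)$; $\mathrm{Sp}_{\mathbb R}(\mathcal M,\alpha)$ = those linear on chart $\alpha$. $\mathcal H_{p,a}=\{m\in\mathcal M_{\mathbb R}:p(m)\ge a\}$. A PL polytope over $F$: compact $\bigcap_{i=1}^\ell\mathcal H_{p_i,a_i}$, $p_i\in\mathrm{Sp}(\mathcal M)$, $a_i\in F$; $V(\mathcal P)=\{m:\exists\alpha,\ \pi_\alpha(m)\text{ a vertex of the polytope }\pi_\alpha(\mathcal P)\}$. Strict dual $F$-pair: $\mathsf v:\mathcal M_{\mathbb R}\to\mathrm{Sp}_{\mathbb R}(\mathcal N)$, $\mathsf w:\mathcal N_{\mathbb R}\to\mathrm{Sp}_{\mathbb R}(\mathcal M)$ such that (1) $\mathsf v(\mathcal M)\subseteq\mathrm{Sp}(\mathcal N)$, $\mathsf w(\mathcal N)\subseteq\mathrm{Sp}(\mathcal M)$; (2) $\mathsf v(m)(n)=\mathsf w(n)(m)$; (3) these restrictions are bijections; (4) the $\mathsf v^{-1}(\mathrm{Sp}_{\mathbb R}(\mathcal N,\gamma))$ are exactly the maximal cones of $\Sigma(\mathcal M)$ and the $\mathsf w^{-1}(\mathrm{Sp}_{\mathbb R}(\mathcal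 M,\alpha))$ those of $\Sigma(\mathcal N)$. Support function: $\psi_{\mathcal P}(n)=\min\{\mathsf v(u)(n):u\in\mathcal P\}$ for $n\in\mathcal N_{\mathbb R}$. $P_{\mathcal N_{\mathbb R}}$ is the set of functions on $\mathcal N_{\mathbb R}$ generated by $\mathrm{Sp}_{\mathbb R}(\mathcal N)$ under pointwise $\min$ and $+$. *)

theory Defs
  imports "HOL-Analysis.Analysis" "HOL-Library.FuncSet"
begin

definition subring_F :: "real set \<Rightarrow> bool" where
  "subring_F F \<longleftrightarrow> \<int> \<subseteq> F \<and> (\<forall>x\<in>F. \<forall>y\<in>F. x + y \<in> F \<and> x * y \<in> F \<and> - x \<in> F)"

text \<open>The free F-module of rank r, realised as the F-points of real^'r.\<close>
definition Fvecs :: "real set \<Rightarrow> (real^'n) set" where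
  "Fvecs F = {x. \<forall>i. x $ i \<in> F}"

definition fincone :: "(real^'n) set \<Rightarrow> (real^'n) set" where
  "fincone S = {y. \<exists>c. (\<forall>u\<in>S. 0 \<le> c u) \<and> y = (\<Sum>u\<in>S. c u *\<^sub>R u)}"

text \<open>Polyhedral cone generated by finitely many vectors with coordinates in F
  (F = UNIV gives arbitrary real polyhedral cones).\<close>
definition polyhedral_cone_F :: "real set \<Rightarrow> (real^'n) set \<Rightarrow> bool" where
  "polyhedral_cone_F F C \<longleftrightarrow> (\<exists>S. finite S \<and> S \<subseteq> Fvecs F \<and> C = fincone S)"

definition complete_fan :: "((real^'n) set \<Rightarrow> bool) \<Rightarrow> (real^'n) set set \<Rightarrow> bool" where
  "complete_fan cone_ok \<Sigma> \<longleftrightarrow> finite \<Sigma> \<and> (\<forall>C\<in>\<Sigma>. cone_ok C)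
     \<and> (\<forall>C\<in>\<Sigma>. \<forall>D. D face_of C \<and> D \<noteq> {} \<longrightarrow> D \<in> \<Sigma>)
     \<and> (\<forall>C\<in>\<Sigma>. \<forall>D\<in>\<Sigma>. (C \<inter> D) face_of C \<and> (C \<inter> D) face_of D)
     \<and> \<Union>\<Sigma> = UNIV"

definition F_linear :: "real set \<Rightarrow> (real^'n \<Rightarrow> real^'n) \<Rightarrow> bool" where
  "F_linear F L \<longleftrightarrow> linear L \<and> L ` Fvecs F \<subseteq> Fvecs F"

definition PL_F :: "real set \<Rightarrow> (real^'n \<Rightarrow> real^'n) \<Rightarrow> bool" where
  "PL_F F f \<longleftrightarrow> continuous_on UNIV f \<and>
     (\<exists>\<Sigma>. complete_fan (polyhedral_cone_F F) \<Sigma> \<and>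
          (\<forall>C\<in>\<Sigma>. \<exists>L. F_linear F L \<and> (\<forall>x\<in>C. f x = L x)))"

text \<open>Charts indexed by the type 'i; \<mu> \<alpha> \<beta> is the mutation from chart \<alpha> to chart \<beta>
  (extended to the real charts M_\<alpha> \<otimes> R).\<close>
definition polyptych :: "real set \<Rightarrow> ('i \<Rightarrow> 'i \<Rightarrow> real^'n \<Rightarrow> real^'n) \<Rightarrow> bool" where
  "polyptych F \<mu> \<longleftrightarrow> subring_F F \<and> (\<forall>\<alpha> \<beta>. PL_F F (\<mu> \<alpha> \<beta>))
     \<and> (\<forall>\<alpha>. \<mu> \<alpha> \<alpha> = id)
     \<and> (\<forall>\<alpha> \<beta>. \<mu> \<alpha> \<beta> = inv (\<mu> \<beta> \<alpha>))
     \<and> (\<forall>\<alpha> \<beta> \<gamma>. \<mu> \<beta> \<gamma> \<circ> \<mu> \<alpha> \<beta> = \<mu> \<alpha> \<gamma>)"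

text \<open>Elements of M_R: equivalence classes, represented by the family of their
  chart representatives (m \<alpha> = \<pi>_\<alpha>(m)).\<close>
definition MR :: "('i \<Rightarrow> 'i \<Rightarrow> real^'n \<Rightarrow> real^'n) \<Rightarrow> ('i \<Rightarrow> real^'n) set" where
  "MR \<mu> = {m. \<forall>\<alpha> \<beta>. m \<beta> = \<mu> \<alpha> \<beta> (m \<alpha>)}"

definition Mpts :: "real set \<Rightarrow> ('i \<Rightarrow> 'i \<Rightarrow> real^'n \<Rightarrow> real^'n) \<Rightarrow> ('i \<Rightarrow> real^'n) set" where
  "Mpts F \<mu> = {m \<in> MR \<mu>. \<forall>\<alpha>. m \<alpha> \<in> Fvecs F}"

definition chart_inv :: "('i \<Rightarrow> 'i \<Rightarrow> real^'n \<Rightarrow> real^'n) \<Rightarrow> 'i \<Rightarrow> real^'n \<Rightarrow> ('i \<Rightarrow> real^'n)" where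
  "chart_inv \<mu> \<alpha> x = (\<lambda>\<beta>. \<mu> \<alpha> \<beta> x)"

definition addc :: "('i \<Rightarrow> 'i \<Rightarrow> real^'n \<Rightarrow> real^'n) \<Rightarrow> 'i \<Rightarrow> ('i \<Rightarrow> real^'n) \<Rightarrow> ('i \<Rightarrow> real^'n) \<Rightarrow> ('i \<Rightarrow> real^'n)" where
  "addc \<mu> \<alpha> m m' = chart_inv \<mu> \<alpha> (m \<alpha> + m' \<alpha>)"

definition smulc :: "('i \<Rightarrow> 'i \<Rightarrow> real^'n \<Rightarrow> real^'n) \<Rightarrow> 'i \<Rightarrow> real \<Rightarrow> ('i \<Rightarrow> real^'n) \<Rightarrow> ('i \<Rightarrow> real^'n)" where
  "smulc \<mu> \<alpha> c m = chart_inv \<mu> \<alpha> (c *\<^sub>R m \<alpha>)"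

text \<open>Points of M_R (functions on M_R, extensional outside M_R).  The minimum over
  charts is expressed as: a lower bound that is attained.\<close>
definition SpR :: "('i \<Rightarrow> 'i \<Rightarrow> real^'n \<Rightarrow> real^'n) \<Rightarrow> (('i \<Rightarrow> real^'n) \<Rightarrow> real) set" where
  "SpR \<mu> = {p. p \<in> extensional (MR \<mu>)
     \<and> (\<forall>m\<in>MR \<mu>. \<forall>m'\<in>MR \<mu>.
           (\<forall>\<alpha>. p m + p m' \<le> p (addc \<mu> \<alpha> m m')) \<and> (\<exists>\<alpha>. p m + p m' = p (addc \<mu> \<alpha> m m')))
     \<and> (\<forall>m\<in>MR \<mu>. \<forall>c::real. c \<ge> 0 \<longrightarrow> (\<forall>\<alpha>. p (smulc \<mu> \<alpha> c m) = c * p m))}"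

definition Sp :: "real set \<Rightarrow> ('i \<Rightarrow> 'i \<Rightarrow> real^'n \<Rightarrow> real^'n) \<Rightarrow> (('i \<Rightarrow> real^'n) \<Rightarrow> real) set" where
  "Sp F \<mu> = {p \<in> SpR \<mu>. \<forall>m\<in>Mpts F \<mu>. p m \<in> F}"

definition SpR_chart :: "('i \<Rightarrow> 'i \<Rightarrow> real^'n \<Rightarrow> real^'n) \<Rightarrow> 'i \<Rightarrow> (('i \<Rightarrow> real^'n) \<Rightarrow> real) set" where
  "SpR_chart \<mu> \<alpha> = {p \<in> SpR \<mu>. linear (\<lambda>x. p (chart_inv \<mu> \<alpha> x))}"

definition fan_of_PL :: "('i \<Rightarrow> 'i \<Rightarrow> real^'n \<Rightarrow> real^'n) \<Rightarrow> ('i \<Rightarrow> real^'n) set set \<Rightarrow> bool" where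
  "fan_of_PL \<mu> \<Sigma> \<longleftrightarrow> (\<forall>C\<in>\<Sigma>. C \<subseteq> MR \<mu>)
     \<and> (\<forall>\<alpha>. complete_fan (polyhedral_cone_F UNIV) ((\<lambda>C. (\<lambda>m. m \<alpha>) ` C) ` \<Sigma>))
     \<and> (\<forall>C\<in>\<Sigma>. \<forall>\<alpha> \<beta>. \<exists>L. linear L \<and> (\<forall>m\<in>C. m \<beta> = L (m \<alpha>)))"

definition is_Sigma :: "('i \<Rightarrow> 'i \<Rightarrow> real^'n \<Rightarrow> real^'n) \<Rightarrow> ('i \<Rightarrow> real^'n) set set \<Rightarrow> bool" where
  "is_Sigma \<mu> \<Sigma> \<longleftrightarrow> fan_of_PL \<mu> \<Sigma> \<and>
     (\<forall>\<Sigma>'. fan_of_PL \<mu> \<Sigma>' \<longrightarrow> (\<forall>C'\<in>\<Sigma>'. \<exists>C\<in>\<Sigma>. C' \<subseteq> C))"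

definition maxcones :: "'a set set \<Rightarrow> 'a set set" where
  "maxcones \<Sigma> = {C \<in> \<Sigma>. \<not> (\<exists>D\<in>\<Sigma>. C \<subset> D)}"

definition strict_dual_pair ::
  "real set \<Rightarrow> ('i \<Rightarrow> 'i \<Rightarrow> real^'n \<Rightarrow> real^'n) \<Rightarrow> ('j \<Rightarrow> 'j \<Rightarrow> real^'k \<Rightarrow> real^'k)
   \<Rightarrow> (('i \<Rightarrow> real^'n) \<Rightarrow> ('j \<Rightarrow> real^'k) \<Rightarrow> real) \<Rightarrow> (('j \<Rightarrow> real^'k) \<Rightarrow> ('i \<Rightarrow> real^'n) \<Rightarrow> real) \<Rightarrow> bool" where
  "strict_dual_pair F \<mu> \<nu> v w \<longleftrightarrow>
     (\<forall>m\<in>MR \<mu>. v m \<in> SpR \<nu>) \<and> (\<forall>n\<in>MR \<nu>. w n \<in> SpR \<mu>)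
   \<and> v ` Mpts F \<mu> \<subseteq> Sp F \<nu> \<and> w ` Mpts F \<nu> \<subseteq> Sp F \<mu>
   \<and> (\<forall>m\<in>MR \<mu>. \<forall>n\<in>MR \<nu>. v m n = w n m)
   \<and> bij_betw v (Mpts F \<mu>) (Sp F \<nu>) \<and> bij_betw w (Mpts F \<nu>) (Sp F \<mu>)
   \<and> (\<exists>\<Sigma>. is_Sigma \<mu> \<Sigma> \<and> maxcones \<Sigma> = range (\<lambda>\<gamma>. {m \<in> MR \<mu>. v m \<in> SpR_chart \<nu> \<gamma>}))
   \<and> (\<exists>\<Sigma>. is_Sigma \<nu> \<Sigma> \<and> maxcones \<Sigma> = range (\<lambda>\<alpha>. {n \<in> MR \<nu>. w n \<in> SpR_chart \<mu> \<alpha>}))"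

definition halfspace :: "('i \<Rightarrow> 'i \<Rightarrow> real^'n \<Rightarrow> real^'n) \<Rightarrow> (('i \<Rightarrow> real^'n) \<Rightarrow> real) \<Rightarrow> real \<Rightarrow> ('i \<Rightarrow> real^'n) set" where
  "halfspace \<mu> p a = {m \<in> MR \<mu>. p m \<ge> a}"

definition PL_polytope :: "real set \<Rightarrow> ('i \<Rightarrow> 'i \<Rightarrow> real^'n \<Rightarrow> real^'n) \<Rightarrow> ('i \<Rightarrow> real^'n) set \<Rightarrow> bool" where
  "PL_polytope F \<mu> P \<longleftrightarrow>
     (\<exists>pa :: ((('i \<Rightarrow> real^'n) \<Rightarrow> real) \<times> real) list.
         (\<forall>(p, a) \<in> set pa. p \<in> Sp F \<mu> \<and> a \<in> F)
       \<and> P = MR \<mu> \<inter> (\<Inter>(p, a) \<in> set pa. halfspace \<mu> p a))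
   \<and> (\<forall>\<alpha>. compact ((\<lambda>m. m \<alpha>) ` P))"

definition vertices :: "('i \<Rightarrow> 'i \<Rightarrow> real^'n \<Rightarrow> real^'n) \<Rightarrow> ('i \<Rightarrow> real^'n) set \<Rightarrow> ('i \<Rightarrow> real^'n) set" where
  "vertices \<mu> P = {m \<in> MR \<mu>. \<exists>\<alpha>. (m \<alpha>) extreme_point_of ((\<lambda>u. u \<alpha>) ` P)}"

definition support_fn :: "(('i \<Rightarrow> real^'n) \<Rightarrow> ('j \<Rightarrow> real^'k) \<Rightarrow> real) \<Rightarrow> ('i \<Rightarrow> real^'n) set \<Rightarrow> ('j \<Rightarrow> real^'k) \<Rightarrow> real" where
  "support_fn v P n = Inf ((\<lambda>u. v u n) ` P)"

inductive_set Psemi :: "('j \<Rightarrow> 'j \<Rightarrow> real^'k \<Rightarrow> real^'k) \<Rightarrow> (('j \<Rightarrow> real^'k) \<Rightarrow> real) set"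
  for \<nu> where
  gen: "p \<in> SpR \<nu> \<Longrightarrow> p \<in> Psemi \<nu>"
| min: "f \<in> Psemi \<nu> \<Longrightarrow> g \<in> Psemi \<nu> \<Longrightarrow> (\<lambda>n. min (f n) (g n)) \<in> Psemi \<nu>"
| add: "f \<in> Psemi \<nu> \<Longrightarrow> g \<in> Psemi \<nu> \<Longrightarrow> (\<lambda>n. f n + g n) \<in> Psemi \<nu>"

end

theory Submission
  imports Defs
begin

lemma poly_comp: "polyptych F \<mu> \<Longrightarrow> \<mu> \<beta> \<gamma> (\<mu> \<alpha> \<beta> x) = \<mu> \<alpha> \<gamma> x"
  unfolding polyptych_def by (metis comp_apply)

lemma poly_id: "polyptych F \<mu> \<Longrightarrow> \<mu> \<alpha> \<alpha> x = x"
  unfolding polyptych_def by simp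

lemma chart_inv_MR: "polyptych F \<mu> \<Longrightarrow> chart_inv \<mu> \<alpha> x \<in> MR \<mu>"
  unfolding MR_def chart_inv_def by (simp add: poly_comp)

lemma chart_inv_app: "polyptych F \<mu> \<Longrightarrow> chart_inv \<mu> \<alpha> x \<alpha> = x"
  unfolding chart_inv_def by (simp add: poly_id)

lemma MR_chart_inv: "m \<in> MR \<mu> \<Longrightarrow> chart_inv \<mu> \<alpha> (m \<alpha>) = m"
  unfolding MR_def chart_inv_def by auto

lemma MR_eq: "m \<in> MR \<mu> \<Longrightarrow> m' \<in> MR \<mu> \<Longrightarrow> m \<alpha> = m' \<alpha> \<Longrightarrow> m = m'"
  by (metis MR_chart_inv)

lemma SpR_super:
  assumes "polyptych F \<mu>" "p \<in> SpR \<mu>"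
  shows "p (chart_inv \<mu> \<alpha> x) + p (chart_inv \<mu> \<alpha> y) \<le> p (chart_inv \<mu> \<alpha> (x + y))"
proof -
  have "addc \<mu> \<alpha> (chart_inv \<mu> \<alpha> x) (chart_inv \<mu> \<alpha> y) = chart_inv \<mu> \<alpha> (x + y)"
    unfolding addc_def using assms(1) by (simp add: chart_inv_app)
  moreover have "\<forall>m\<in>MR \<mu>. \<forall>m'\<in>MR \<mu>. \<forall>\<alpha>. p m + p m' \<le> p (addc \<mu> \<alpha> m m')"
    using assms(2) unfolding SpR_def by blast
  ultimately show ?thesis using chart_inv_MR[OF assms(1)] by metis
qed

lemma SpR_hom:
  assumes "polyptych F \<mu>" "p \<in> SpR \<mu>" "c \<ge> 0"
  shows "p (chart_inv \<mu> \<alpha> (c *\<^sub>R x)) = c * p (chart_inv \<mu> \<alpha> x)"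
proof -
  have "smulc \<mu> \<alpha> c (chart_inv \<mu> \<alpha> x) = chart_inv \<mu> \<alpha> (c *\<^sub>R x)"
    unfolding smulc_def using assms(1) by (simp add: chart_inv_app)
  moreover have "\<forall>m\<in>MR \<mu>. \<forall>c::real. c \<ge> 0 \<longrightarrow> (\<forall>\<alpha>. p (smulc \<mu> \<alpha> c m) = c * p m)"
    using assms(2) unfolding SpR_def by blast
  ultimately show ?thesis using chart_inv_MR[OF assms(1)] assms(3) by metis
qed

lemma SpR_concave:
  assumes "polyptych F \<mu>" "p \<in> SpR \<mu>" "0 \<le> t" "t \<le> 1"
  shows "t * p (chart_inv \<mu> \<alpha> x) + (1 - t) * p (chart_inv \<mu> \<alpha> y)
     \<le> p (chart_inv \<mu> \<alpha> (t *\<^sub>R x + (1 - t) *\<^sub>R y))"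
  using SpR_super[OF assms(1,2), of \<alpha> "t *\<^sub>R x" "(1 - t) *\<^sub>R y"]
    SpR_hom[OF assms(1,2), of t \<alpha> x] SpR_hom[OF assms(1,2), of "1-t" \<alpha> y] assms(3,4)
  by simp

lemma SpR_convex_on:
  assumes "polyptych F \<mu>" "p \<in> SpR \<mu>"
  shows "convex_on UNIV (\<lambda>x. - p (chart_inv \<mu> \<alpha> x))"
proof (rule convex_onI)
  fix t :: real and x y
  assume "0 < t" "t < 1"
  then show "- p (chart_inv \<mu> \<alpha> ((1 - t) *\<^sub>R x + t *\<^sub>R y))
        \<le> (1 - t) * - p (chart_inv \<mu> \<alpha> x) + t * - p (chart_inv \<mu> \<alpha> y)"
    using SpR_concave[OF assms, of "1-t" \<alpha> x y] by simp
qed simp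

lemma SpR_cont:
  assumes "polyptych F \<mu>" "p \<in> SpR \<mu>"
  shows "continuous_on UNIV (\<lambda>x. p (chart_inv \<mu> \<alpha> x))"
proof -
  have "continuous_on UNIV (\<lambda>x. - p (chart_inv \<mu> \<alpha> x))"
    by (rule convex_on_continuous) (auto intro: SpR_convex_on[OF assms])
  then have "continuous_on UNIV (\<lambda>x. - (- p (chart_inv \<mu> \<alpha> x)))"
    by (rule continuous_on_minus)
  then show ?thesis by simp
qed

lemma SpR_convex_level:
  assumes "polyptych F \<mu>" "p \<in> SpR \<mu>"
  shows "convex {x. a \<le> p (chart_inv \<mu> \<alpha> x)}"
proof (rule convexI)
  fix x y and u v :: real
  assume h0: "x \<in> {x. a \<le> p (chart_inv \<mu> \<alpha> x)}" "y \<in> {x. a \<le> p (chart_inv \<mu> \<alpha> x)}"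
    and h: "0 \<le> u" "0 \<le> v" "u + v = 1"
  then have hx: "a \<le> p (chart_inv \<mu> \<alpha> x)" and hy: "a \<le> p (chart_inv \<mu> \<alpha> y)" by auto
  have v: "v = 1 - u" using h by simp
  have A: "u * a \<le> u * p (chart_inv \<mu> \<alpha> x)" using h hx by (intro mult_left_mono) auto
  have B: "v * a \<le> v * p (chart_inv \<mu> \<alpha> y)" using h hy by (intro mult_left_mono) auto
  have C: "a = u * a + v * a" using h(3) by (metis distrib_right mult_1)
  have "a \<le> u * p (chart_inv \<mu> \<alpha> x) + v * p (chart_inv \<mu> \<alpha> y)"
    using A B C by linarith
  also have "\<dots> \<le> p (chart_inv \<mu> \<alpha> (u *\<^sub>R x + v *\<^sub>R y))"
    using SpR_concave[OF assms, of u \<alpha> x y] h v by simp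
  finally show "u *\<^sub>R x + v *\<^sub>R y \<in> {x. a \<le> p (chart_inv \<mu> \<alpha> x)}" by simp
qed

lemma chart_image_P:
  assumes "polyptych F \<mu>" "P = MR \<mu> \<inter> (\<Inter>(p, a) \<in> set pa. halfspace \<mu> p a)"
  shows "(\<lambda>m. m \<alpha>) ` P = {x. \<forall>(p, a)\<in>set pa. a \<le> p (chart_inv \<mu> \<alpha> x)}"
proof
  show "(\<lambda>m. m \<alpha>) ` P \<subseteq> {x. \<forall>(p, a)\<in>set pa. a \<le> p (chart_inv \<mu> \<alpha> x)}"
    using assms(2) by (auto simp: halfspace_def MR_chart_inv)
  show "{x. \<forall>(p, a)\<in>set pa. a \<le> p (chart_inv \<mu> \<alpha> x)} \<subseteq> (\<lambda>m. m \<alpha>) ` P"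
  proof
    fix x assume x: "x \<in> {x. \<forall>(p, a)\<in>set pa. a \<le> p (chart_inv \<mu> \<alpha> x)}"
    have "chart_inv \<mu> \<alpha> x \<in> P"
      using x assms chart_inv_MR[OF assms(1)] by (auto simp: halfspace_def)
    moreover have "x = chart_inv \<mu> \<alpha> x \<alpha>" using chart_inv_app[OF assms(1)] by simp
    ultimately show "x \<in> (\<lambda>m. m \<alpha>) ` P" by blast
  qed
qed

lemma sdp_D:
  assumes "strict_dual_pair F \<mu> \<nu> v w"
  shows "\<forall>m\<in>MR \<mu>. v m \<in> SpR \<nu>"
    and "\<forall>n\<in>MR \<nu>. w n \<in> SpR \<mu>"
    and "\<forall>m\<in>MR \<mu>. \<forall>n\<in>MR \<nu>. v m n = w n m"
    and "bij_betw w (Mpts F \<nu>) (Sp F \<mu>)"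
    and "\<exists>\<Sigma>. is_Sigma \<nu> \<Sigma> \<and> maxcones \<Sigma> = range (\<lambda>\<alpha>. {n \<in> MR \<nu>. w n \<in> SpR_chart \<mu> \<alpha>})"
  using assms unfolding strict_dual_pair_def
  apply -
  apply (elim conjE, assumption)+
  done

lemma point_chart:
  assumes "strict_dual_pair F \<mu> \<nu> v w" "n \<in> MR \<nu>"
  shows "\<exists>\<alpha>. w n \<in> SpR_chart \<mu> \<alpha>"
proof -
  obtain \<Sigma> where S: "is_Sigma \<nu> \<Sigma>"
    and mx: "maxcones \<Sigma> = range (\<lambda>\<alpha>. {n \<in> MR \<nu>. w n \<in> SpR_chart \<mu> \<alpha>})"
    using sdp_D(5)[OF assms(1)] by blast
  have fp: "fan_of_PL \<nu> \<Sigma>" using S unfolding is_Sigma_def by (rule conjunct1)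
  have sub: "\<forall>C\<in>\<Sigma>. C \<subseteq> MR \<nu>"
    using fp unfolding fan_of_PL_def by (elim conjE)
  have cf: "complete_fan (polyhedral_cone_F UNIV) ((\<lambda>C. (\<lambda>m. m \<beta>) ` C) ` \<Sigma>)" for \<beta>
    using fp unfolding fan_of_PL_def by (elim conjE) (erule allE)
  fix \<beta>
  have fin1: "finite ((\<lambda>C. (\<lambda>m. m \<beta>) ` C) ` \<Sigma>)" and un: "\<Union>((\<lambda>C. (\<lambda>m. m \<beta>) ` C) ` \<Sigma>) = UNIV"
    using cf[of \<beta>] by (simp_all add: complete_fan_def)
  have inj: "inj_on (\<lambda>C. (\<lambda>m. m \<beta>) ` C) \<Sigma>"
  proof (rule inj_onI)
    fix C D assume C: "C \<in> \<Sigma>" and D: "D \<in> \<Sigma>" and e: "(\<lambda>m. m \<beta>) ` C = (\<lambda>m. m \<beta>) ` D"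
    have "C \<subseteq> D" if "C \<in> \<Sigma>" "D \<in> \<Sigma>" "(\<lambda>m. m \<beta>) ` C = (\<lambda>m. m \<beta>) ` D" for C D
    proof
      fix x assume "x \<in> C"
      then have "x \<beta> \<in> (\<lambda>m. m \<beta>) ` C" by (rule imageI)
      then have "x \<beta> \<in> (\<lambda>m. m \<beta>) ` D" using that(3) by simp
      then obtain y where y: "y \<in> D" "y \<beta> = x \<beta>" by auto
      have xM: "x \<in> MR \<nu>" using sub that(1) \<open>x \<in> C\<close> by auto
      have yM: "y \<in> MR \<nu>" using sub that(2) y(1) by auto
      have "y = x" using MR_eq[OF yM xM y(2)] .
      then show "x \<in> D" using y(1) by simp
    qed
    then show "C = D" using C D e by blast
  qed
  have fin: "finite \<Sigma>" using finite_imageD[OF fin1 inj] .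
  have "n \<beta> \<in> \<Union>((\<lambda>C. (\<lambda>m. m \<beta>) ` C) ` \<Sigma>)" using un by simp
  then obtain C m where C: "C \<in> \<Sigma>" "m \<in> C" "m \<beta> = n \<beta>" by auto
  then have "m = n" using MR_eq[of m \<nu> n \<beta>] sub assms(2) by blast
  with C have nC: "n \<in> C" by simp
  have fin2: "finite {D \<in> \<Sigma>. C \<subseteq> D}" using fin by simp
  have ne2: "{D \<in> \<Sigma>. C \<subseteq> D} \<noteq> {}" using C(1) by blast
  obtain D where D0: "D \<in> {D \<in> \<Sigma>. C \<subseteq> D}" and D1: "\<forall>E\<in>{D \<in> \<Sigma>. C \<subseteq> D}. D \<le> E \<longrightarrow> D = E"
    using finite_has_maximal[OF fin2 ne2] by blast
  have D: "D \<in> \<Sigma>" "C \<subseteq> D" "\<forall>E\<in>\<Sigma>. D \<subseteq> E \<longrightarrow> D = E"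
    using D0 D1 by auto
  then have "D \<in> maxcones \<Sigma>" unfolding maxcones_def by blast
  then obtain \<alpha> where "D = {n \<in> MR \<nu>. w n \<in> SpR_chart \<mu> \<alpha>}" using mx by auto
  then show ?thesis using nC D(2) by blast
qed

lemma Sp_chart:
  assumes "strict_dual_pair F \<mu> \<nu> v w" "p \<in> Sp F \<mu>"
  shows "\<exists>\<alpha>. linear (\<lambda>x. p (chart_inv \<mu> \<alpha> x))"
proof -
  have "bij_betw w (Mpts F \<nu>) (Sp F \<mu>)" using sdp_D(4)[OF assms(1)] .
  then have "w ` Mpts F \<nu> = Sp F \<mu>" by (rule bij_betw_imp_surj_on)
  then obtain n where n: "n \<in> Mpts F \<nu>" "p = w n" using assms(2) by blast
  then have "n \<in> MR \<nu>" unfolding Mpts_def by blast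
  then obtain \<alpha> where "w n \<in> SpR_chart \<mu> \<alpha>" using point_chart[OF assms(1)] by blast
  then show ?thesis using n unfolding SpR_chart_def by blast
qed

lemma fincone_sum_in:
  assumes "finite T" "T \<subseteq> S" "\<forall>u\<in>T. 0 \<le> c u"
  shows "(\<Sum>u\<in>T. c u *\<^sub>R u) \<in> convex_cone hull S"
  using assms
proof (induction T rule: finite_induct)
  case empty
  then show ?case by (simp add: convex_cone_hull_contains_0)
next
  case (insert u T)
  have "c u *\<^sub>R u \<in> convex_cone hull S"
    using insert.prems by (intro convex_cone_hull_mul hull_inc) auto
  moreover have "(\<Sum>u\<in>T. c u *\<^sub>R u) \<in> convex_cone hull S" using insert by auto
  ultimately show ?case using insert.hyps by (simp add: convex_cone_hull_add)
qed

lemma fincone_eq: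
  assumes "finite S"
  shows "fincone S = convex_cone hull S"
proof
  show "fincone S \<subseteq> convex_cone hull S"
    unfolding fincone_def using fincone_sum_in[OF assms subset_refl] by blast
  show "convex_cone hull S \<subseteq> fincone S"
  proof (rule hull_minimal)
    show "S \<subseteq> fincone S"
    proof
      fix x assume x: "x \<in> S"
      have "(\<Sum>u\<in>S. (if u = x then 1 else 0) *\<^sub>R u) = x"
        using assms x by (simp add: if_distrib[of "\<lambda>c. c *\<^sub>R _"] sum.delta' cong: if_cong)
      then show "x \<in> fincone S" unfolding fincone_def
        by (intro CollectI exI[of _ "\<lambda>u. if u = x then 1 else 0"]) auto
    qed
    show "convex_cone (fincone S)"
      unfolding convex_cone_iff
    proof (intro conjI ballI allI impI)
      show "0 \<in> fincone S" unfolding fincone_def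
        by (intro CollectI exI[of _ "\<lambda>u. 0"]) auto
    next
      fix x y assume "x \<in> fincone S" "y \<in> fincone S"
      then obtain c d where c: "\<forall>u\<in>S. 0 \<le> c u" "x = (\<Sum>u\<in>S. c u *\<^sub>R u)"
        and d: "\<forall>u\<in>S. 0 \<le> d u" "y = (\<Sum>u\<in>S. d u *\<^sub>R u)"
        unfolding fincone_def by auto
      have "x + y = (\<Sum>u\<in>S. (c u + d u) *\<^sub>R u)"
        using c d by (simp add: scaleR_add_left sum.distrib)
      then show "x + y \<in> fincone S" unfolding fincone_def
        using c d by (intro CollectI exI[of _ "\<lambda>u. c u + d u"]) auto
    next
      fix x and k :: real assume "x \<in> fincone S" "0 \<le> k"
      then obtain c where c: "\<forall>u\<in>S. 0 \<le> c u" "x = (\<Sum>u\<in>S. c u *\<^sub>R u)"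
        unfolding fincone_def by auto
      have "k *\<^sub>R x = (\<Sum>u\<in>S. (k * c u) *\<^sub>R u)"
        using c by (simp add: scaleR_sum_right)
      then show "k *\<^sub>R x \<in> fincone S" unfolding fincone_def
        using c \<open>0 \<le> k\<close> by (intro CollectI exI[of _ "\<lambda>u. k * c u"]) auto
    qed
  qed
qed

lemma polyhedral_cone_polyhedron:
  assumes "polyhedral_cone_F F C"
  shows "polyhedron C"
proof -
  obtain S where "finite S" "C = fincone S"
    using assms unfolding polyhedral_cone_F_def by blast
  then show ?thesis by (simp add: fincone_eq polyhedron_convex_cone_hull)
qed

lemma polyhedron_lin_ge:
  fixes h :: "'a::euclidean_space \<Rightarrow> real"
  assumes "linear h"
  shows "polyhedron {x. a \<le> h x}"
proof -
  have "h x = adjoint h 1 \<bullet> x" for x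
    using adjoint_clauses(2)[OF assms, of 1 x] by (simp add: inner_real_def)
  then have "{x. a \<le> h x} = {x. adjoint h 1 \<bullet> x \<ge> a}" by auto
  then show ?thesis by (simp add: polyhedron_halfspace_ge)
qed

lemma level_pieces:
  fixes f :: "real^'n \<Rightarrow> real^'n" and g :: "real^'n \<Rightarrow> real"
  assumes "PL_F F f" "linear g"
  shows "\<exists>\<A>. finite \<A> \<and> (\<forall>A\<in>\<A>. polyhedron A) \<and> {x. a \<le> g (f x)} = \<Union>\<A>"
proof -
  obtain \<Sigma> where cf: "complete_fan (polyhedral_cone_F F) \<Sigma>"
    and lin: "\<forall>C\<in>\<Sigma>. \<exists>L. F_linear F L \<and> (\<forall>x\<in>C. f x = L x)"
    using assms(1) unfolding PL_F_def by blast
  obtain Lf where Lf: "\<forall>C\<in>\<Sigma>. F_linear F (Lf C) \<and> (\<forall>x\<in>C. f x = Lf C x)"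
    using bchoice[OF lin] by blast
  have fin: "finite \<Sigma>" using cf unfolding complete_fan_def by (elim conjE)
  have pc: "\<forall>C\<in>\<Sigma>. polyhedral_cone_F F C" using cf unfolding complete_fan_def by (elim conjE)
  have un: "\<Union>\<Sigma> = UNIV" using cf unfolding complete_fan_def by (elim conjE)
  define \<A> where "\<A> = (\<lambda>C. C \<inter> {x. a \<le> g (Lf C x)}) ` \<Sigma>"
  have "finite \<A>" unfolding \<A>_def using fin by simp
  moreover have "\<forall>A\<in>\<A>. polyhedron A"
  proof
    fix A assume "A \<in> \<A>"
    then obtain C where C: "C \<in> \<Sigma>" "A = C \<inter> {x. a \<le> g (Lf C x)}" unfolding \<A>_def by blast
    have "linear (Lf C)" using Lf C(1) unfolding F_linear_def by blast
    then have "linear (\<lambda>x. g (Lf C x))" using assms(2) linear_compose[of "Lf C" g]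
      by (simp add: o_def)
    then have "polyhedron {x. a \<le> g (Lf C x)}" by (rule polyhedron_lin_ge)
    moreover have "polyhedron C" using pc C(1) polyhedral_cone_polyhedron by blast
    ultimately show "polyhedron A" using C(2) by simp
  qed
  moreover have "{x. a \<le> g (f x)} = \<Union>\<A>"
  proof
    show "{x. a \<le> g (f x)} \<subseteq> \<Union>\<A>"
    proof
      fix x assume x: "x \<in> {x. a \<le> g (f x)}"
      have "x \<in> \<Union>\<Sigma>" using un by simp
      then obtain C where C: "C \<in> \<Sigma>" "x \<in> C" by blast
      then have "f x = Lf C x" using Lf by blast
      then have "x \<in> C \<inter> {x. a \<le> g (Lf C x)}" using x C by simp
      then show "x \<in> \<Union>\<A>" unfolding \<A>_def using C(1) by blast
    qed
    show "\<Union>\<A> \<subseteq> {x. a \<le> g (f x)}"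
    proof
      fix x assume "x \<in> \<Union>\<A>"
      then obtain C where C: "C \<in> \<Sigma>" "x \<in> C" "a \<le> g (Lf C x)" unfolding \<A>_def by blast
      then have "f x = Lf C x" using Lf by blast
      then show "x \<in> {x. a \<le> g (f x)}" using C by simp
    qed
  qed
  ultimately show ?thesis by blast
qed

lemma pieces_list:
  assumes "\<forall>q\<in>set qs. \<exists>\<A>. finite \<A> \<and> (\<forall>A\<in>\<A>. polyhedron A) \<and> {x::'a::euclidean_space. Q q x} = \<Union>\<A>"
  shows "\<exists>\<K>. finite \<K> \<and> (\<forall>A\<in>\<K>. polyhedron A) \<and> {x. \<forall>q\<in>set qs. Q q x} = \<Union>\<K>"
  using assms
proof (induction qs)
  case Nil
  show ?case by (intro exI[of _ "{UNIV}"]) auto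
next
  case (Cons q qs)
  obtain \<K> where K: "finite \<K>" "\<forall>A\<in>\<K>. polyhedron A" "{x. \<forall>q\<in>set qs. Q q x} = \<Union>\<K>"
    using Cons by auto
  obtain \<A> where A: "finite \<A>" "\<forall>A\<in>\<A>. polyhedron A" "{x. Q q x} = \<Union>\<A>"
    using Cons.prems by auto
  define \<K>' where "\<K>' = (\<lambda>(A, B). A \<inter> B) ` (\<A> \<times> \<K>)"
  have "finite \<K>'" unfolding \<K>'_def using A(1) K(1) by simp
  moreover have "\<forall>A\<in>\<K>'. polyhedron A" unfolding \<K>'_def using A(2) K(2) by auto
  moreover have "{x. \<forall>q'\<in>set (q # qs). Q q' x} = \<Union>\<K>'"
  proof
    show "{x. \<forall>q'\<in>set (q # qs). Q q' x} \<subseteq> \<Union>\<K>'"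
    proof
      fix x assume x: "x \<in> {x. \<forall>q'\<in>set (q # qs). Q q' x}"
      then have "x \<in> \<Union>\<A>" using A(3) by auto
      then obtain A' where A': "A' \<in> \<A>" "x \<in> A'" by blast
      have "x \<in> \<Union>\<K>" using x K(3) by auto
      then obtain B where B: "B \<in> \<K>" "x \<in> B" by blast
      have "A' \<inter> B \<in> \<K>'" unfolding \<K>'_def using A' B by force
      then show "x \<in> \<Union>\<K>'" using A' B by blast
    qed
    show "\<Union>\<K>' \<subseteq> {x. \<forall>q'\<in>set (q # qs). Q q' x}"
    proof
      fix x assume "x \<in> \<Union>\<K>'"
      then obtain A' B where AB: "A' \<in> \<A>" "B \<in> \<K>" "x \<in> A'" "x \<in> B" unfolding \<K>'_def by auto
      then have "x \<in> \<Union>\<A>" "x \<in> \<Union>\<K>" by blast+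
      then show "x \<in> {x. \<forall>q'\<in>set (q # qs). Q q' x}" using A(3) K(3) by auto
    qed
  qed
  ultimately show ?case by blast
qed

lemma finite_ext_union:
  fixes \<K> :: "'a::euclidean_space set set"
  assumes "finite \<K>" "\<forall>A\<in>\<K>. polyhedron A"
  shows "finite {x. x extreme_point_of \<Union>\<K>}"
proof (rule finite_subset)
  show "{x. x extreme_point_of \<Union>\<K>} \<subseteq> (\<Union>A\<in>\<K>. {x. x extreme_point_of A})"
  proof
    fix x assume "x \<in> {x. x extreme_point_of \<Union>\<K>}"
    then have e: "x \<in> \<Union>\<K>" "\<forall>a\<in>\<Union>\<K>. \<forall>b\<in>\<Union>\<K>. x \<notin> open_segment a b"
      unfolding extreme_point_of_def by auto
    then obtain A where A: "A \<in> \<K>" "x \<in> A" by blast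
    have "\<forall>a\<in>A. \<forall>b\<in>A. x \<notin> open_segment a b" using e(2) A(1) by blast
    then have "x extreme_point_of A" using A(2) unfolding extreme_point_of_def by blast
    then show "x \<in> (\<Union>A\<in>\<K>. {x. x extreme_point_of A})" using A(1) by blast
  qed
  show "finite (\<Union>A\<in>\<K>. {x. x extreme_point_of A})"
    using assms finite_polyhedron_extreme_points by blast
qed

lemma convex_lin_ge:
  fixes h :: "'a::euclidean_space \<Rightarrow> real"
  assumes "linear h"
  shows "convex {x. a \<le> h x}"
  using polyhedron_lin_ge[OF assms] polyhedron_imp_convex by blast

lemma chart_inv_comp: "polyptych F \<mu> \<Longrightarrow> chart_inv \<mu> \<alpha> (\<mu> \<beta> \<alpha> x) = chart_inv \<mu> \<beta> x"
  unfolding chart_inv_def by (simp add: poly_comp)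

lemma chart_level_pieces:
  assumes "polyptych F \<mu>" "strict_dual_pair F \<mu> \<nu> v w" "p \<in> Sp F \<mu>"
  shows "\<exists>\<A>. finite \<A> \<and> (\<forall>A\<in>\<A>. polyhedron A) \<and> {x. a \<le> p (chart_inv \<mu> \<beta> x)} = \<Union>\<A>"
proof -
  obtain \<alpha> where lin: "linear (\<lambda>x. p (chart_inv \<mu> \<alpha> x))" using Sp_chart[OF assms(2,3)] by blast
  have pl: "PL_F F (\<mu> \<beta> \<alpha>)" using assms(1) unfolding polyptych_def by blast
  have eq: "{x. a \<le> p (chart_inv \<mu> \<beta> x)} = {x. a \<le> (\<lambda>x. p (chart_inv \<mu> \<alpha> x)) (\<mu> \<beta> \<alpha> x)}"
    using chart_inv_comp[OF assms(1)] by simp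
  show ?thesis unfolding eq by (rule level_pieces[OF pl lin])
qed

lemma min_cont:
  fixes h :: "'s \<Rightarrow> 'a::topological_space \<Rightarrow> real"
  assumes "finite V" "V \<noteq> {}" "\<forall>s\<in>V. continuous_on UNIV (h s)"
  shows "continuous_on UNIV (\<lambda>x. Min ((\<lambda>s. h s x) ` V))"
  using assms
proof (induction V rule: finite_ne_induct)
  case (singleton s)
  then show ?case by simp
next
  case (insert s V)
  have "(\<lambda>x. Min ((\<lambda>s. h s x) ` insert s V)) = (\<lambda>x. min (h s x) (Min ((\<lambda>s. h s x) ` V)))"
    using insert.hyps by (simp add: Min_insert)
  moreover have "continuous_on UNIV (\<lambda>x. min (h s x) (Min ((\<lambda>s. h s x) ` V)))"
  proof -
    have c1: "continuous_on UNIV (h s)" using insert.prems by simp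
    have c2: "continuous_on UNIV (\<lambda>x. Min ((\<lambda>s. h s x) ` V))" using insert.IH insert.prems by simp
    show ?thesis using continuous_on_min[OF c1 c2] .
  qed
  ultimately show ?case by metis
qed

lemma min_psemi:
  assumes "finite V" "V \<noteq> {}" "\<forall>s\<in>V. h s \<in> Psemi \<nu>"
  shows "(\<lambda>x. Min ((\<lambda>s. h s x) ` V)) \<in> Psemi \<nu>"
  using assms
proof (induction V rule: finite_ne_induct)
  case (singleton s)
  then show ?case by simp
next
  case (insert s V)
  have "(\<lambda>x. Min ((\<lambda>s. h s x) ` insert s V)) = (\<lambda>x. min (h s x) (Min ((\<lambda>s. h s x) ` V)))"
    using insert.hyps by (simp add: Min_insert)
  moreover have "(\<lambda>x. min (h s x) (Min ((\<lambda>s. h s x) ` V))) \<in> Psemi \<nu>"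
  proof -
    have c1: "h s \<in> Psemi \<nu>" using insert.prems by simp
    have c2: "(\<lambda>x. Min ((\<lambda>s. h s x) ` V)) \<in> Psemi \<nu>" using insert.IH insert.prems by simp
    show ?thesis using Psemi.min[OF c1 c2] .
  qed
  ultimately show ?case by metis
qed

theorem mainTheorem12:
  fixes F :: "real set"
    and \<mu> :: "'i::finite \<Rightarrow> 'i \<Rightarrow> real^'r \<Rightarrow> real^'r"
    and \<nu> :: "'j \<Rightarrow> 'j \<Rightarrow> real^'s \<Rightarrow> real^'s"
    and v :: "('i \<Rightarrow> real^'r) \<Rightarrow> ('j \<Rightarrow> real^'s) \<Rightarrow> real"
    and w :: "('j \<Rightarrow> real^'s) \<Rightarrow> ('i \<Rightarrow> real^'r) \<Rightarrow> real"
    and P :: "('i \<Rightarrow> real^'r) set"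
  assumes "polyptych F \<mu>" and "polyptych F \<nu>"
    and "strict_dual_pair F \<mu> \<nu> v w"
    and "PL_polytope F \<mu> P" and "P \<noteq> {}"
  shows "finite (vertices \<mu> P)
    \<and> (\<forall>n\<in>MR \<nu>. support_fn v P n = Min ((\<lambda>s. v s n) ` vertices \<mu> P))
    \<and> (\<forall>\<beta>. continuous_on UNIV (\<lambda>x. support_fn v P (chart_inv \<nu> \<beta> x)))
    \<and> (\<exists>g\<in>Psemi \<nu>. \<forall>n\<in>MR \<nu>. support_fn v P n = g n)"
proof -
  note pm = assms(1) and pn = assms(2) and sdp = assms(3)
  obtain pa where pa1: "\<forall>(p, a) \<in> set pa. p \<in> Sp F \<mu> \<and> a \<in> F"
    and pa2: "P = MR \<mu> \<inter> (\<Inter>(p, a) \<in> set pa. halfspace \<mu> p a)"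
    and cpt: "\<forall>\<alpha>. compact ((\<lambda>m. m \<alpha>) ` P)"
    using assms(4) unfolding PL_polytope_def by (elim conjE exE) (rule that)
  define K where "K \<alpha> = (\<lambda>m. m \<alpha>) ` P" for \<alpha>
  define E where "E \<alpha> = {x. x extreme_point_of K \<alpha>}" for \<alpha>
  have Kform: "K \<alpha> = {x. \<forall>(p, a)\<in>set pa. a \<le> p (chart_inv \<mu> \<alpha> x)}" for \<alpha>
    unfolding K_def using chart_image_P[OF pm pa2] .
  have PMR: "P \<subseteq> MR \<mu>" using pa2 by blast
  have finE: "finite (E \<alpha>)" for \<alpha>
  proof -
    have "\<forall>q\<in>set pa. \<exists>\<A>. finite \<A> \<and> (\<forall>A\<in>\<A>. polyhedron A) \<and>
        {x. (case q of (p, a) \<Rightarrow> a \<le> p (chart_inv \<mu> \<alpha> x))} = \<Union>\<A>"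
    proof
      fix q assume q: "q \<in> set pa"
      obtain p a where qe: "q = (p, a)" by (cases q)
      have "p \<in> Sp F \<mu>" using pa1 q qe by auto
      then show "\<exists>\<A>. finite \<A> \<and> (\<forall>A\<in>\<A>. polyhedron A) \<and>
        {x. (case q of (p, a) \<Rightarrow> a \<le> p (chart_inv \<mu> \<alpha> x))} = \<Union>\<A>"
        using chart_level_pieces[OF pm sdp, of p a \<alpha>] qe by simp
    qed
    from pieces_list[OF this] obtain \<K> where
      K: "finite \<K>" "\<forall>A\<in>\<K>. polyhedron A"
         "{x. \<forall>q\<in>set pa. (case q of (p, a) \<Rightarrow> a \<le> p (chart_inv \<mu> \<alpha> x))} = \<Union>\<K>"
      by blast
    have "K \<alpha> = \<Union>\<K>" using Kform[of \<alpha>] K(3) by (simp add: case_prod_unfold)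
    then show ?thesis unfolding E_def using finite_ext_union[OF K(1,2)] by simp
  qed
  have convK: "convex (K \<alpha>)" for \<alpha>
  proof -
    have "K \<alpha> = \<Inter>((\<lambda>q. {x. (case q of (p, a) \<Rightarrow> a \<le> p (chart_inv \<mu> \<alpha> x))}) ` set pa)"
      unfolding Kform by auto
    moreover have "convex {x. (case q of (p, a) \<Rightarrow> a \<le> p (chart_inv \<mu> \<alpha> x))}" if "q \<in> set pa" for q
    proof -
      obtain p a where qe: "q = (p, a)" by (cases q)
      have "p \<in> SpR \<mu>" using pa1 that qe unfolding Sp_def by auto
      then show ?thesis using SpR_convex_level[OF pm] qe by simp
    qed
    ultimately show ?thesis by (metis (no_types, lifting) convex_Inter imageE)
  qed
  have cptK: "compact (K \<alpha>)" for \<alpha> unfolding K_def using cpt by blast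
  have KM: "K \<alpha> = convex hull (E \<alpha>)" for \<alpha>
    unfolding E_def using Krein_Milman_Minkowski[OF cptK convK] .
  have Kne: "K \<alpha> \<noteq> {}" for \<alpha> unfolding K_def using assms(5) by simp
  have Ene: "E \<alpha> \<noteq> {}" for \<alpha> using KM[of \<alpha>] Kne[of \<alpha>] by auto
  have EK: "E \<alpha> \<subseteq> K \<alpha>" for \<alpha> unfolding E_def extreme_point_of_def by blast
  have Evert: "chart_inv \<mu> \<alpha> e \<in> vertices \<mu> P" if "e \<in> E \<alpha>" for e \<alpha>
  proof -
    have "chart_inv \<mu> \<alpha> e \<in> MR \<mu>" using chart_inv_MR[OF pm] .
    moreover have "chart_inv \<mu> \<alpha> e \<alpha> = e" using chart_inv_app[OF pm] .
    moreover have "e extreme_point_of (\<lambda>u. u \<alpha>) ` P" using that unfolding E_def K_def by simp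
    ultimately show ?thesis unfolding vertices_def by (intro CollectI conjI exI[of _ \<alpha>]) simp_all
  qed
  have Vsub: "vertices \<mu> P \<subseteq> (\<Union>\<alpha>. chart_inv \<mu> \<alpha> ` E \<alpha>)"
  proof
    fix m assume "m \<in> vertices \<mu> P"
    then obtain \<alpha> where m: "m \<in> MR \<mu>" "m \<alpha> \<in> E \<alpha>" unfolding vertices_def E_def K_def by auto
    have "m = chart_inv \<mu> \<alpha> (m \<alpha>)" using MR_chart_inv[OF m(1)] by simp
    then show "m \<in> (\<Union>\<alpha>. chart_inv \<mu> \<alpha> ` E \<alpha>)" using m(2) by blast
  qed
  have finV: "finite (vertices \<mu> P)"
    by (rule finite_subset[OF Vsub]) (simp add: finE)
  have VP: "vertices \<mu> P \<subseteq> P"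
  proof
    fix m assume "m \<in> vertices \<mu> P"
    then obtain \<alpha> where m: "m \<in> MR \<mu>" "m \<alpha> \<in> E \<alpha>" unfolding vertices_def E_def K_def by auto
    then have "m \<alpha> \<in> K \<alpha>" using EK by blast
    then obtain u where u: "u \<in> P" "u \<alpha> = m \<alpha>" unfolding K_def by auto
    have uM: "u \<in> MR \<mu>" using u(1) PMR by blast
    have "u = m" using MR_eq[OF uM m(1) u(2)] .
    then show "m \<in> P" using u(1) by simp
  qed
  obtain \<alpha>0 :: 'i where True by simp
  obtain e00 where "e00 \<in> E \<alpha>0" using Ene by blast
  then have Vne: "vertices \<mu> P \<noteq> {}" using Evert by blast
  have vw: "\<forall>m\<in>MR \<mu>. \<forall>n\<in>MR \<nu>. v m n = w n m" using sdp_D(3)[OF sdp] .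
  have key: "support_fn v P n = Min ((\<lambda>s. v s n) ` vertices \<mu> P)" if n: "n \<in> MR \<nu>" for n
  proof -
    obtain \<alpha> where "w n \<in> SpR_chart \<mu> \<alpha>" using point_chart[OF sdp n] by blast
    then have lin: "linear (\<lambda>x. w n (chart_inv \<mu> \<alpha> x))" unfolding SpR_chart_def by blast
    define g where "g x = w n (chart_inv \<mu> \<alpha> x)" for x
    have ling: "linear g" using lin unfolding g_def by simp
    have "Min (g ` E \<alpha>) \<in> g ` E \<alpha>" using finE Ene by simp
    then obtain e0 where e0: "e0 \<in> E \<alpha>" "g e0 = Min (g ` E \<alpha>)" by auto
    have "E \<alpha> \<subseteq> {x. g e0 \<le> g x}" using e0 finE by auto
    then have "convex hull E \<alpha> \<subseteq> {x. g e0 \<le> g x}"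
      by (rule hull_minimal) (rule convex_lin_ge[OF ling])
    then have Kge: "K \<alpha> \<subseteq> {x. g e0 \<le> g x}" using KM by simp
    define s0 where "s0 = chart_inv \<mu> \<alpha> e0"
    have s0V: "s0 \<in> vertices \<mu> P" unfolding s0_def using Evert[OF e0(1)] .
    have s0P: "s0 \<in> P" using s0V VP by blast
    have vs0: "v s0 n = g e0" unfolding s0_def g_def using vw chart_inv_MR[OF pm] n by blast
    have low: "v s0 n \<le> v u n" if u: "u \<in> P" for u
    proof -
      have uM: "u \<in> MR \<mu>" using u PMR by blast
      have "u \<alpha> \<in> K \<alpha>" unfolding K_def using u by blast
      then have "g e0 \<le> g (u \<alpha>)" using Kge by blast
      moreover have "g (u \<alpha>) = v u n" unfolding g_def using MR_chart_inv[OF uM] vw uM n by simp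
      ultimately show ?thesis using vs0 by simp
    qed
    have "support_fn v P n = v s0 n"
      unfolding support_fn_def
      by (rule cInf_eq_minimum) (use s0P low in auto)
    moreover have "Min ((\<lambda>s. v s n) ` vertices \<mu> P) = v s0 n"
      by (rule Min_eqI) (use finV s0V VP low in auto)
    ultimately show ?thesis by simp
  qed
  have cont: "continuous_on UNIV (\<lambda>x. support_fn v P (chart_inv \<nu> \<beta> x))" for \<beta>
  proof -
    have c: "continuous_on UNIV (\<lambda>x. Min ((\<lambda>s. v s (chart_inv \<nu> \<beta> x)) ` vertices \<mu> P))"
    proof (rule min_cont[OF finV Vne, of "\<lambda>s x. v s (chart_inv \<nu> \<beta> x)"], rule ballI)
      fix s assume "s \<in> vertices \<mu> P"
      then have "s \<in> MR \<mu>" using VP PMR by blast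
      then have "v s \<in> SpR \<nu>" using sdp_D(1)[OF sdp] by blast
      then show "continuous_on UNIV (\<lambda>x. v s (chart_inv \<nu> \<beta> x))" using SpR_cont[OF pn] by blast
    qed
    have "support_fn v P (chart_inv \<nu> \<beta> x) = Min ((\<lambda>s. v s (chart_inv \<nu> \<beta> x)) ` vertices \<mu> P)" for x
      using key chart_inv_MR[OF pn] by blast
    then show ?thesis using c by simp
  qed
  have ps: "(\<lambda>n. Min ((\<lambda>s. v s n) ` vertices \<mu> P)) \<in> Psemi \<nu>"
  proof (rule min_psemi[OF finV Vne], rule ballI)
    fix s assume "s \<in> vertices \<mu> P"
    then have "s \<in> MR \<mu>" using VP PMR by blast
    then have "v s \<in> SpR \<nu>" using sdp_D(1)[OF sdp] by blast
    then show "v s \<in> Psemi \<nu>" by (rule Psemi.gen)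
  qed
  have ex: "\<exists>g\<in>Psemi \<nu>. \<forall>n\<in>MR \<nu>. support_fn v P n = g n"
    using ps key by (intro bexI[of _ "\<lambda>n. Min ((\<lambda>s. v s n) ` vertices \<mu> P)"]) auto
  show ?thesis using finV key cont ex by (intro conjI ballI allI) auto
qed

end
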